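(* Let $F$ be a field with $F=\mathbb Q$ or $F=\mathbb Z_p$ ($p$ prime), and let $A$ be a prime $F$-algebra generated as an $F$-algebra by two principally nilpotent elements $x,y$ such that $x+y$ is a minimal non-nilpotent element of $A$ and $xA+yA=\mathcal J(A)$ is the unique maximal right (and left) ideal of $A$. Then $A$ embeds (as a subring) into a countable prime von Neumann regular ring $R$ such that $J\cap A\neq 0$ for every non-zero ideal $J$ of $R$.
   Context: All rings are associative with unit; "ideal" means two-sided ideal. A ring $R$ is von Neumann regular (VNR) if for every $x\in R$ there is $y\in R$ with $x=xyx$. An element $a$ of a ring $A$ is principally nilpotent if every element of the right ideal $aA$ is nilpotent. An element $b$ of $A$ is minimal non-nilpotent if $b$ is not nilpotent and for every non-zero ideal $J$ of $A$ there is $n$ with $b^n\in J$. $\mathcal J(A)$ is the Jacobson radical. *)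

theory Defs
  imports "HOL-Algebra.Algebra"
begin

definition rat_ring :: "rat ring" where
  "rat_ring = \<lparr>carrier = UNIV, monoid.mult = (*), one = 1, ring.zero = 0, add = (+)\<rparr>"

definition right_ideal :: "'a set \<Rightarrow> ('a, 'b) ring_scheme \<Rightarrow> bool" where
  "right_ideal I R \<longleftrightarrow> additive_subgroup I R \<and>
     (\<forall>a\<in>I. \<forall>r\<in>carrier R. a \<otimes>\<^bsub>R\<^esub> r \<in> I)"

definition left_ideal :: "'a set \<Rightarrow> ('a, 'b) ring_scheme \<Rightarrow> bool" where
  "left_ideal I R \<longleftrightarrow> additive_subgroup I R \<and>
     (\<forall>a\<in>I. \<forall>r\<in>carrier R. r \<otimes>\<^bsub>R\<^esub> a \<in> I)"

definition maximal_right_ideal :: "'a set \<Rightarrow> ('a, 'b) ring_scheme \<Rightarrow> bool" where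
  "maximal_right_ideal I R \<longleftrightarrow> right_ideal I R \<and> I \<noteq> carrier R \<and>
     (\<forall>K. right_ideal K R \<and> I \<subseteq> K \<and> K \<noteq> carrier R \<longrightarrow> K = I)"

definition maximal_left_ideal :: "'a set \<Rightarrow> ('a, 'b) ring_scheme \<Rightarrow> bool" where
  "maximal_left_ideal I R \<longleftrightarrow> left_ideal I R \<and> I \<noteq> carrier R \<and>
     (\<forall>K. left_ideal K R \<and> I \<subseteq> K \<and> K \<noteq> carrier R \<longrightarrow> K = I)"

definition jacobson_radical :: "('a, 'b) ring_scheme \<Rightarrow> 'a set" where
  "jacobson_radical R = carrier R \<inter> \<Inter> {I. maximal_right_ideal I R}"

definition nilpotent_elem :: "('a, 'b) ring_scheme \<Rightarrow> 'a \<Rightarrow> bool" where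
  "nilpotent_elem R a \<longleftrightarrow> (\<exists>n::nat. a [^]\<^bsub>R\<^esub> n = \<zero>\<^bsub>R\<^esub>)"

definition principally_nilpotent :: "('a, 'b) ring_scheme \<Rightarrow> 'a \<Rightarrow> bool" where
  "principally_nilpotent R a \<longleftrightarrow> (\<forall>r\<in>carrier R. nilpotent_elem R (a \<otimes>\<^bsub>R\<^esub> r))"

definition minimal_non_nilpotent :: "('a, 'b) ring_scheme \<Rightarrow> 'a \<Rightarrow> bool" where
  "minimal_non_nilpotent R b \<longleftrightarrow> \<not> nilpotent_elem R b \<and>
     (\<forall>J. ideal J R \<and> J \<noteq> {\<zero>\<^bsub>R\<^esub>} \<longrightarrow> (\<exists>n::nat. b [^]\<^bsub>R\<^esub> n \<in> J))"

definition prime_ring :: "('a, 'b) ring_scheme \<Rightarrow> bool" where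
  "prime_ring R \<longleftrightarrow> ring R \<and> \<one>\<^bsub>R\<^esub> \<noteq> \<zero>\<^bsub>R\<^esub> \<and>
     (\<forall>a\<in>carrier R. \<forall>b\<in>carrier R.
        (\<forall>r\<in>carrier R. a \<otimes>\<^bsub>R\<^esub> r \<otimes>\<^bsub>R\<^esub> b = \<zero>\<^bsub>R\<^esub>) \<longrightarrow> a = \<zero>\<^bsub>R\<^esub> \<or> b = \<zero>\<^bsub>R\<^esub>)"

definition von_neumann_regular :: "('a, 'b) ring_scheme \<Rightarrow> bool" where
  "von_neumann_regular R \<longleftrightarrow> ring R \<and>
     (\<forall>x\<in>carrier R. \<exists>y\<in>carrier R. x = x \<otimes>\<^bsub>R\<^esub> y \<otimes>\<^bsub>R\<^esub> x)"

definition algebra_via :: "('f, 'c) ring_scheme \<Rightarrow> ('a, 'b) ring_scheme \<Rightarrow> ('f \<Rightarrow> 'a) \<Rightarrow> bool" where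
  "algebra_via F A phi \<longleftrightarrow> field F \<and> ring A \<and> phi \<in> ring_hom F A \<and>
     (\<forall>c\<in>carrier F. \<forall>a\<in>carrier A. phi c \<otimes>\<^bsub>A\<^esub> a = a \<otimes>\<^bsub>A\<^esub> phi c)"

end

theory Submission
  imports Defs
begin
primrec gen_layer :: "('a,'b) ring_scheme \<Rightarrow> 'a set \<Rightarrow> nat \<Rightarrow> 'a set" where
  "gen_layer R H 0 = insert \<one>\<^bsub>R\<^esub> H"
| "gen_layer R H (Suc n) = gen_layer R H n \<union> (\<lambda>(a,b). a \<oplus>\<^bsub>R\<^esub> b) ` (gen_layer R H n \<times> gen_layer R H n)
     \<union> (\<lambda>(a,b). a \<otimes>\<^bsub>R\<^esub> b) ` (gen_layer R H n \<times> gen_layer R H n) \<union> (\<lambda>a. \<ominus>\<^bsub>R\<^esub> a) ` gen_layer R H n"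

lemma gen_layer_mono: "m \<le> n \<Longrightarrow> gen_layer R H m \<subseteq> gen_layer R H n"
  by (induction n) (auto simp: le_Suc_eq)

lemma gen_layer_countable: "countable H \<Longrightarrow> countable (gen_layer R H n)"
  by (induction n) auto

lemma countable_generate_ring:
  assumes "countable H" shows "countable (generate_ring R H)"
proof -
  have "generate_ring R H \<subseteq> (\<Union>n. gen_layer R H n)"
  proof
    fix z assume "z \<in> generate_ring R H"
    then show "z \<in> (\<Union>n. gen_layer R H n)"
    proof (induction rule: generate_ring.induct)
      case one then show ?case by (auto intro: exI[of _ 0])
    next
      case (incl h) then show ?case by (auto intro: exI[of _ 0])
    next
      case (a_inv h)
      then obtain n where "h \<in> gen_layer R H n" by auto
      then have "\<ominus>\<^bsub>R\<^esub> h \<in> gen_layer R H (Suc n)" by auto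
      then show ?case by blast
    next
      case (eng_add h1 h2)
      then obtain n m where "h1 \<in> gen_layer R H n" "h2 \<in> gen_layer R H m" by auto
      then have "h1 \<in> gen_layer R H (max n m)" "h2 \<in> gen_layer R H (max n m)"
        using gen_layer_mono[of n "max n m" R H] gen_layer_mono[of m "max n m" R H] by auto
      then have "(h1,h2) \<in> gen_layer R H (max n m) \<times> gen_layer R H (max n m)" by simp
      then have "h1 \<oplus>\<^bsub>R\<^esub> h2 \<in> (\<lambda>(a,b). a \<oplus>\<^bsub>R\<^esub> b) ` (gen_layer R H (max n m) \<times> gen_layer R H (max n m))"
        by (rule rev_image_eqI) simp
      then have "h1 \<oplus>\<^bsub>R\<^esub> h2 \<in> gen_layer R H (Suc (max n m))" by simp
      then show ?case by blast
    next
      case (eng_mult h1 h2)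
      then obtain n m where "h1 \<in> gen_layer R H n" "h2 \<in> gen_layer R H m" by auto
      then have "h1 \<in> gen_layer R H (max n m)" "h2 \<in> gen_layer R H (max n m)"
        using gen_layer_mono[of n "max n m" R H] gen_layer_mono[of m "max n m" R H] by auto
      then have "(h1,h2) \<in> gen_layer R H (max n m) \<times> gen_layer R H (max n m)" by simp
      then have "h1 \<otimes>\<^bsub>R\<^esub> h2 \<in> (\<lambda>(a,b). a \<otimes>\<^bsub>R\<^esub> b) ` (gen_layer R H (max n m) \<times> gen_layer R H (max n m))"
        by (rule rev_image_eqI) simp
      then have "h1 \<otimes>\<^bsub>R\<^esub> h2 \<in> gen_layer R H (Suc (max n m))" by simp
      then show ?case by blast
    qed
  qed
  moreover have "countable (\<Union>n. gen_layer R H n)"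
    using gen_layer_countable[OF assms] by auto
  ultimately show ?thesis by (rule countable_subset)
qed

lemma vnr_image:
  assumes "von_neumann_regular R" "ring S" "h \<in> ring_hom R S" "h ` carrier R = carrier S"
  shows "von_neumann_regular S"
  unfolding von_neumann_regular_def
proof (intro conjI ballI)
  show "ring S" by fact
  fix z assume "z \<in> carrier S"
  then obtain a where a: "a \<in> carrier R" "z = h a" using assms(4) by auto
  then obtain b where b: "b \<in> carrier R" "a = a \<otimes>\<^bsub>R\<^esub> b \<otimes>\<^bsub>R\<^esub> a"
    using assms(1) unfolding von_neumann_regular_def by auto
  interpret R: ring R using assms(1) unfolding von_neumann_regular_def by auto
  have "h a = h a \<otimes>\<^bsub>S\<^esub> h b \<otimes>\<^bsub>S\<^esub> h a"
    using b a ring_hom_memE[OF assms(3)] by (metis R.m_closed)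
  then show "\<exists>y\<in>carrier S. z = z \<otimes>\<^bsub>S\<^esub> y \<otimes>\<^bsub>S\<^esub> z"
    using a b ring_hom_memE(1)[OF assms(3)] by auto
qed

lemma ideal_chain_Union:
  fixes R (structure)
  assumes "ring R" "C \<noteq> {}" "\<And>I. I \<in> C \<Longrightarrow> ideal I R"
    "\<And>I J. I \<in> C \<Longrightarrow> J \<in> C \<Longrightarrow> I \<subseteq> J \<or> J \<subseteq> I"
  shows "ideal (\<Union>C) R"
proof (rule idealI[OF assms(1)])
  interpret ring R by fact
  have sub: "\<Union> C \<subseteq> carrier R"
  proof
    fix z assume "z \<in> \<Union>C"
    then obtain I where "I \<in> C" "z \<in> I" by blast
    then show "z \<in> carrier R" using ideal.Icarr[OF assms(3)] by blast
  qed
  have cl: "a \<oplus> b \<in> \<Union>C" if ha: "a \<in> \<Union>C" "b \<in> \<Union>C" for a b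
  proof -
    obtain I J where IJ: "I \<in> C" "J \<in> C" "a \<in> I" "b \<in> J" using ha by blast
    have "\<exists>K\<in>C. a \<in> K \<and> b \<in> K"
    proof (cases "I \<subseteq> J")
      case True then show ?thesis using IJ by blast
    next
      case False then have "J \<subseteq> I" using assms(4)[OF IJ(1,2)] by blast
      then show ?thesis using IJ by blast
    qed
    then obtain K where K: "K \<in> C" "a \<in> K" "b \<in> K" by blast
    interpret K: ideal K R using assms(3)[OF K(1)] .
    have "a \<oplus> b \<in> K" using K(2,3) by (rule K.a_closed)
    then show ?thesis using K(1) by blast
  qed
  have z: "\<zero> \<in> \<Union>C"
  proof -
    obtain I where I: "I \<in> C" using assms(2) by blast
    interpret I: ideal I R using assms(3)[OF I] .
    have "\<zero> \<in> I" by (rule I.zero_closed)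
    then show ?thesis using I by blast
  qed
  have inv: "\<ominus> a \<in> \<Union>C" if ha: "a \<in> \<Union>C" for a
  proof -
    obtain I where I: "I \<in> C" "a \<in> I" using ha by blast
    interpret I: ideal I R using assms(3)[OF I(1)] .
    have "\<ominus> a \<in> I" using I(2) by (rule I.a_inv_closed)
    then show ?thesis using I by blast
  qed
  show "subgroup (\<Union> C) (add_monoid R)"
    by (rule subgroup.intro) (use sub cl z inv in \<open>simp_all add: a_inv_def\<close>)
  fix a x assume ax: "a \<in> \<Union>C" "x \<in> carrier R"
  then obtain I where I: "I \<in> C" "a \<in> I" by blast
  interpret I: ideal I R using assms(3)[OF I(1)] .
  have "x \<otimes> a \<in> I" using I(2) ax(2) by (rule I.I_l_closed)
  then show "x \<otimes> a \<in> \<Union>C" using I by blast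
  have "a \<otimes> x \<in> I" using I(2) ax(2) by (rule I.I_r_closed)
  then show "a \<otimes> x \<in> \<Union>C" using I by blast
qed

lemma prime_from_meets:
  fixes R (structure)
  assumes R: "ring R" and pA: "prime_ring A" and h: "h \<in> ring_hom A R"
    and inj: "inj_on h (carrier A)" and nt: "\<one> \<noteq> \<zero>"
    and meets: "\<forall>J. ideal J R \<and> J \<noteq> {\<zero>} \<longrightarrow> J \<inter> h ` carrier A \<noteq> {\<zero>}"
  shows "prime_ring R"
proof -
  interpret R: ring R by fact
  interpret A: ring A using pA unfolding prime_ring_def by auto
  interpret H: ring_hom_ring A R h using h A.ring_axioms R by (intro ring_hom_ringI2) auto
  have get: "\<exists>a'\<in>carrier A. a' \<noteq> \<zero>\<^bsub>A\<^esub> \<and> h a' \<in> J" if J: "ideal J R" "u \<in> J" "u \<noteq> \<zero>" for J u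
  proof -
    have "J \<noteq> {\<zero>}" using J by auto
    then have "J \<inter> h ` carrier A \<noteq> {\<zero>}" using meets J(1) by auto
    moreover have "\<zero> \<in> J \<inter> h ` carrier A"
      using J(1) H.hom_zero A.zero_closed additive_subgroup.zero_closed[OF ideal.axioms(1)[OF J(1)]]
      by (metis IntI image_eqI)
    ultimately obtain z where z: "z \<in> J" "z \<in> h ` carrier A" "z \<noteq> \<zero>" by blast
    then obtain a' where "a' \<in> carrier A" "z = h a'" by blast
    then show ?thesis using z H.hom_zero by (metis)
  qed
  show ?thesis unfolding prime_ring_def
  proof (intro conjI ballI impI)
    show "ring R" by fact
    show "\<one> \<noteq> \<zero>" by fact
    fix a b assume a: "a \<in> carrier R" and b: "b \<in> carrier R"
      and ab: "\<forall>r\<in>carrier R. a \<otimes> r \<otimes> b = \<zero>"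
    show "a = \<zero> \<or> b = \<zero>"
    proof (rule ccontr)
      assume "\<not> (a = \<zero> \<or> b = \<zero>)"
      then have a0: "a \<noteq> \<zero>" and b0: "b \<noteq> \<zero>" by auto
      define P where "P = {u \<in> carrier R. \<forall>r\<in>carrier R. u \<otimes> r \<otimes> b = \<zero>}"
      have "ideal P R"
      proof (rule idealI[OF R])
        show "subgroup P (add_monoid R)"
        proof (rule subgroup.intro)
          show "P \<subseteq> carrier (add_monoid R)" unfolding P_def by auto
          fix u v assume "u \<in> P" "v \<in> P"
          then show "u \<otimes>\<^bsub>add_monoid R\<^esub> v \<in> P"
            unfolding P_def using b by (simp add: R.l_distr)
        next
          show "\<one>\<^bsub>add_monoid R\<^esub> \<in> P" unfolding P_def using b by simp
        next
          fix u assume "u \<in> P"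
          then show "inv\<^bsub>add_monoid R\<^esub> u \<in> P"
            unfolding P_def using b by (simp add: a_inv_def[symmetric] R.l_minus)
        qed
      next
        fix u x assume u: "u \<in> P" and x: "x \<in> carrier R"
        show "x \<otimes> u \<in> P" unfolding P_def
        proof (intro CollectI conjI ballI)
          show "x \<otimes> u \<in> carrier R" using u x unfolding P_def by auto
          fix r assume r: "r \<in> carrier R"
          have "x \<otimes> u \<otimes> r \<otimes> b = x \<otimes> (u \<otimes> r \<otimes> b)"
            using u x r b unfolding P_def by (simp add: R.m_assoc)
          also have "\<dots> = \<zero>" using u x r unfolding P_def by auto
          finally show "x \<otimes> u \<otimes> r \<otimes> b = \<zero>" .
        qed
        show "u \<otimes> x \<in> P" unfolding P_def
        proof (intro CollectI conjI ballI)
          show "u \<otimes> x \<in> carrier R" using u x unfolding P_def by auto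
          fix r assume r: "r \<in> carrier R"
          have "u \<otimes> x \<otimes> r \<otimes> b = u \<otimes> (x \<otimes> r) \<otimes> b"
            using u x r b unfolding P_def by (simp add: R.m_assoc)
          also have "\<dots> = \<zero>" using u x r unfolding P_def by auto
          finally show "u \<otimes> x \<otimes> r \<otimes> b = \<zero>" .
        qed
      qed
      moreover have "a \<in> P" unfolding P_def using a ab by auto
      ultimately obtain a' where a': "a' \<in> carrier A" "a' \<noteq> \<zero>\<^bsub>A\<^esub>" "h a' \<in> P"
        using get a0 by blast
      define P' where "P' = {u \<in> carrier R. \<forall>r\<in>carrier R. h a' \<otimes> r \<otimes> u = \<zero>}"
      have ha': "h a' \<in> carrier R" using a' by simp
      have "ideal P' R"
      proof (rule idealI[OF R])
        show "subgroup P' (add_monoid R)"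
        proof (rule subgroup.intro)
          show "P' \<subseteq> carrier (add_monoid R)" unfolding P'_def by auto
          fix u v assume "u \<in> P'" "v \<in> P'"
          then show "u \<otimes>\<^bsub>add_monoid R\<^esub> v \<in> P'"
            unfolding P'_def using ha' by (simp add: R.r_distr)
        next
          show "\<one>\<^bsub>add_monoid R\<^esub> \<in> P'" unfolding P'_def using ha' by simp
        next
          fix u assume "u \<in> P'"
          then show "inv\<^bsub>add_monoid R\<^esub> u \<in> P'"
            unfolding P'_def using ha' by (simp add: a_inv_def[symmetric] R.r_minus)
        qed
      next
        fix u x assume u: "u \<in> P'" and x: "x \<in> carrier R"
        show "x \<otimes> u \<in> P'" unfolding P'_def
        proof (intro CollectI conjI ballI)
          show "x \<otimes> u \<in> carrier R" using u x unfolding P'_def by auto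
          fix r assume r: "r \<in> carrier R"
          have "h a' \<otimes> r \<otimes> (x \<otimes> u) = h a' \<otimes> (r \<otimes> x) \<otimes> u"
            using u x r ha' unfolding P'_def by (simp add: R.m_assoc)
          also have "\<dots> = \<zero>" using u x r unfolding P'_def by auto
          finally show "h a' \<otimes> r \<otimes> (x \<otimes> u) = \<zero>" .
        qed
        show "u \<otimes> x \<in> P'" unfolding P'_def
        proof (intro CollectI conjI ballI)
          show "u \<otimes> x \<in> carrier R" using u x unfolding P'_def by auto
          fix r assume r: "r \<in> carrier R"
          have "h a' \<otimes> r \<otimes> (u \<otimes> x) = (h a' \<otimes> r \<otimes> u) \<otimes> x"
            using u x r ha' unfolding P'_def by (simp add: R.m_assoc)
          also have "\<dots> = \<zero>" using u x r unfolding P'_def by auto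
          finally show "h a' \<otimes> r \<otimes> (u \<otimes> x) = \<zero>" .
        qed
      qed
      moreover have "b \<in> P'" unfolding P'_def using b a'(3) unfolding P_def by auto
      ultimately obtain b' where b': "b' \<in> carrier A" "b' \<noteq> \<zero>\<^bsub>A\<^esub>" "h b' \<in> P'"
        using get b0 by blast
      have "\<forall>r\<in>carrier A. a' \<otimes>\<^bsub>A\<^esub> r \<otimes>\<^bsub>A\<^esub> b' = \<zero>\<^bsub>A\<^esub>"
      proof
        fix r assume r: "r \<in> carrier A"
        have "h (a' \<otimes>\<^bsub>A\<^esub> r \<otimes>\<^bsub>A\<^esub> b') = h a' \<otimes> h r \<otimes> h b'"
          using r a' b' by simp
        also have "\<dots> = \<zero>" using b'(3) r unfolding P'_def by auto
        also have "\<dots> = h \<zero>\<^bsub>A\<^esub>" by simp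
        finally show "a' \<otimes>\<^bsub>A\<^esub> r \<otimes>\<^bsub>A\<^esub> b' = \<zero>\<^bsub>A\<^esub>"
          using inj r a' b' by (meson A.m_closed A.zero_closed inj_onD)
      qed
      then show False using pA a' b' unfolding prime_ring_def by blast
    qed
  qed
qed

definition transport_ring :: "('x, 'y) ring_scheme \<Rightarrow> ('x \<Rightarrow> 'n) \<Rightarrow> 'n ring" where
  "transport_ring Q enc = (let dec = inv_into (carrier Q) enc in
     \<lparr>carrier = enc ` carrier Q,
      monoid.mult = (\<lambda>a b. enc (dec a \<otimes>\<^bsub>Q\<^esub> dec b)),
      one = enc \<one>\<^bsub>Q\<^esub>, ring.zero = enc \<zero>\<^bsub>Q\<^esub>,
      add = (\<lambda>a b. enc (dec a \<oplus>\<^bsub>Q\<^esub> dec b))\<rparr>)"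

lemma transport_ring:
  assumes Q: "ring Q" and inj: "inj_on enc (carrier Q)"
  shows "ring (transport_ring Q enc)" "enc \<in> ring_hom Q (transport_ring Q enc)"
    "carrier (transport_ring Q enc) = enc ` carrier Q"
proof -
  interpret Q: ring Q by fact
  let ?R = "transport_ring Q enc"
  show car: "carrier ?R = enc ` carrier Q" unfolding transport_ring_def by (simp add: Let_def)
  have iso: "enc \<in> ring_iso Q ?R"
  proof (rule ring_iso_memI)
    fix x assume "x \<in> carrier Q" then show "enc x \<in> carrier ?R" using car by auto
  next
    fix x y assume "x \<in> carrier Q" "y \<in> carrier Q"
    then show "enc (x \<otimes>\<^bsub>Q\<^esub> y) = enc x \<otimes>\<^bsub>?R\<^esub> enc y"
      "enc (x \<oplus>\<^bsub>Q\<^esub> y) = enc x \<oplus>\<^bsub>?R\<^esub> enc y"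
      unfolding transport_ring_def using inj by (simp_all add: Let_def inv_into_f_f)
  next
    show "enc \<one>\<^bsub>Q\<^esub> = \<one>\<^bsub>?R\<^esub>" unfolding transport_ring_def by (simp add: Let_def)
  next
    show "bij_betw enc (carrier Q) (carrier ?R)" using inj car by (simp add: bij_betw_def)
  qed
  then show "enc \<in> ring_hom Q ?R" unfolding ring_iso_def by auto
  have "ring (?R\<lparr>zero := enc \<zero>\<^bsub>Q\<^esub>\<rparr>)" by (rule Q.ring_iso_imp_img_ring[OF iso])
  moreover have "?R\<lparr>zero := enc \<zero>\<^bsub>Q\<^esub>\<rparr> = ?R" unfolding transport_ring_def by (simp add: Let_def)
  ultimately show "ring ?R" by simp
qed

locale vsetup = ring A for A (structure) + fixes K
  assumes K_sub: "K \<subseteq> carrier A" and K_one: "\<one> \<in> K"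
    and K_add: "\<And>k l. k \<in> K \<Longrightarrow> l \<in> K \<Longrightarrow> k \<oplus> l \<in> K"
    and K_mult: "\<And>k l. k \<in> K \<Longrightarrow> l \<in> K \<Longrightarrow> k \<otimes> l \<in> K"
    and K_neg: "\<And>k. k \<in> K \<Longrightarrow> \<ominus> k \<in> K"
    and K_central: "\<And>k a. k \<in> K \<Longrightarrow> a \<in> carrier A \<Longrightarrow> k \<otimes> a = a \<otimes> k"
    and K_inv: "\<And>k. k \<in> K \<Longrightarrow> k \<noteq> \<zero> \<Longrightarrow> \<exists>k'\<in>K. k' \<otimes> k = \<one>"
    and cnt: "countable (carrier A)"
begin

lemma K_carr: "k \<in> K \<Longrightarrow> k \<in> carrier A" using K_sub by auto

lemma K_zero: "\<zero> \<in> K"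
proof -
  have "\<one> \<oplus> \<ominus> \<one> \<in> K" by (intro K_add K_neg K_one)
  then show ?thesis by (simp add: r_neg)
qed

definition subsp :: "'a set \<Rightarrow> bool" where
  "subsp W \<longleftrightarrow> W \<subseteq> carrier A \<and> \<zero> \<in> W \<and> (\<forall>u\<in>W. \<forall>v\<in>W. u \<oplus> v \<in> W) \<and> (\<forall>k\<in>K. \<forall>w\<in>W. k \<otimes> w \<in> W)"

definition ssum :: "'a set \<Rightarrow> 'a set \<Rightarrow> 'a set" where
  "ssum W C = {u. \<exists>w\<in>W. \<exists>c\<in>C. u = w \<oplus> c}"

definition line :: "'a \<Rightarrow> 'a set" where
  "line e = {u. \<exists>k\<in>K. u = k \<otimes> e}"

definition lin :: "('a \<Rightarrow> 'a) \<Rightarrow> bool" where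
  "lin f \<longleftrightarrow> (\<forall>v\<in>carrier A. f v \<in> carrier A) \<and> (\<forall>u\<in>carrier A. \<forall>v\<in>carrier A. f (u \<oplus> v) = f u \<oplus> f v)
     \<and> (\<forall>k\<in>K. \<forall>v\<in>carrier A. f (k \<otimes> v) = k \<otimes> f v)"

lemma subspD:
  assumes "subsp W"
  shows "W \<subseteq> carrier A" "\<zero> \<in> W" "\<And>u v. u \<in> W \<Longrightarrow> v \<in> W \<Longrightarrow> u \<oplus> v \<in> W"
    "\<And>k w. k \<in> K \<Longrightarrow> w \<in> W \<Longrightarrow> k \<otimes> w \<in> W"
  using assms unfolding subsp_def by auto

lemma subsp_carr: "subsp W \<Longrightarrow> w \<in> W \<Longrightarrow> w \<in> carrier A"
  using subspD(1) by auto

lemma subsp_neg: assumes "subsp W" "w \<in> W" shows "\<ominus> w \<in> W"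
proof -
  have w: "w \<in> carrier A" using assms subsp_carr by auto
  have "(\<ominus> \<one>) \<otimes> w \<in> W" using assms by (intro subspD(4) K_neg K_one)
  also have "(\<ominus> \<one>) \<otimes> w = \<ominus> w" using w by (simp add: l_minus)
  finally show ?thesis .
qed

lemma subsp_minus: assumes "subsp W" "u \<in> W" "v \<in> W" shows "u \<ominus> v \<in> W"
  using assms subsp_neg subspD(3) by (simp add: minus_eq)

lemma subsp_ssum: assumes "subsp W" "subsp C" shows "subsp (ssum W C)"
  unfolding subsp_def
proof (intro conjI ballI)
  show "ssum W C \<subseteq> carrier A" unfolding ssum_def using assms subsp_carr by blast
  show "\<zero> \<in> ssum W C" unfolding ssum_def using assms subspD(2) by force
next
  fix u v assume "u \<in> ssum W C" "v \<in> ssum W C"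
  then obtain w1 c1 w2 c2 where h: "w1 \<in> W" "c1 \<in> C" "u = w1 \<oplus> c1" "w2 \<in> W" "c2 \<in> C" "v = w2 \<oplus> c2"
    unfolding ssum_def by blast
  have c: "w1 \<in> carrier A" "c1 \<in> carrier A" "w2 \<in> carrier A" "c2 \<in> carrier A"
    using h assms subsp_carr by auto
  have "u \<oplus> v = (w1 \<oplus> w2) \<oplus> (c1 \<oplus> c2)" using c h by (simp add: a_ac)
  moreover have "w1 \<oplus> w2 \<in> W" "c1 \<oplus> c2 \<in> C" using h assms subspD(3) by auto
  ultimately show "u \<oplus> v \<in> ssum W C" unfolding ssum_def by blast
next
  fix k u assume k: "k \<in> K" and "u \<in> ssum W C"
  then obtain w c where h: "w \<in> W" "c \<in> C" "u = w \<oplus> c" unfolding ssum_def by blast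
  have "k \<otimes> u = k \<otimes> w \<oplus> k \<otimes> c" using h k assms subsp_carr K_carr by (simp add: r_distr)
  moreover have "k \<otimes> w \<in> W" "k \<otimes> c \<in> C" using h k assms subspD(4) by auto
  ultimately show "k \<otimes> u \<in> ssum W C" unfolding ssum_def by blast
qed

lemma subsp_line: assumes e: "e \<in> carrier A" shows "subsp (line e)"
  unfolding subsp_def
proof (intro conjI ballI)
  show "line e \<subseteq> carrier A" unfolding line_def using e K_carr by auto
  show "\<zero> \<in> line e" unfolding line_def using e K_zero by force
next
  fix u v assume "u \<in> line e" "v \<in> line e"
  then obtain k l where h: "k \<in> K" "l \<in> K" "u = k \<otimes> e" "v = l \<otimes> e" unfolding line_def by blast
  then have "u \<oplus> v = (k \<oplus> l) \<otimes> e" using e K_carr by (simp add: l_distr)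
  then show "u \<oplus> v \<in> line e" unfolding line_def using h K_add by blast
next
  fix m u assume m: "m \<in> K" and "u \<in> line e"
  then obtain k where h: "k \<in> K" "u = k \<otimes> e" unfolding line_def by blast
  then have "m \<otimes> u = (m \<otimes> k) \<otimes> e" using e m K_carr by (simp add: m_assoc)
  then show "m \<otimes> u \<in> line e" unfolding line_def using h m K_mult by blast
qed

lemma ssum_left: "\<zero> \<in> C \<Longrightarrow> W \<subseteq> carrier A \<Longrightarrow> W \<subseteq> ssum W C"
  unfolding ssum_def by force

lemma ssum_right: "\<zero> \<in> W \<Longrightarrow> C \<subseteq> carrier A \<Longrightarrow> C \<subseteq> ssum W C"
  unfolding ssum_def by force

lemma ssum_mono: "C \<subseteq> C' \<Longrightarrow> ssum W C \<subseteq> ssum W C'"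
  unfolding ssum_def by blast

definition en :: "nat \<Rightarrow> 'a" where "en = from_nat_into (carrier A)"

lemma en_range: "range en = carrier A"
  unfolding en_def using cnt by (intro range_from_nat_into) auto

lemma en_carr: "en n \<in> carrier A" using en_range by auto

primrec cseq :: "'a set \<Rightarrow> nat \<Rightarrow> 'a set" where
  "cseq W 0 = {\<zero>}"
| "cseq W (Suc n) = (if en n \<in> ssum W (cseq W n) then cseq W n else ssum (cseq W n) (line (en n)))"

lemma cseq_subsp: "subsp (cseq W n)"
proof (induction n)
  case 0 then show ?case unfolding subsp_def using K_carr by auto
next
  case (Suc n) then show ?case using subsp_ssum subsp_line en_carr by auto
qed

lemma cseq_Suc_mono: "cseq W n \<subseteq> cseq W (Suc n)"
  using ssum_left[of "line (en n)" "cseq W n"] subspD(1,2)[OF subsp_line[OF en_carr]] subspD(1)[OF cseq_subsp]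
  by auto

lemma cseq_mono: "m \<le> n \<Longrightarrow> cseq W m \<subseteq> cseq W n"
  by (rule lift_Suc_mono_le[of "cseq W", OF cseq_Suc_mono])

lemma cseq_disj: assumes W: "subsp W" shows "W \<inter> cseq W n = {\<zero>}"
proof (induction n)
  case 0 then show ?case using subspD(2)[OF W] by auto
next
  case (Suc n)
  show ?case
  proof (cases "en n \<in> ssum W (cseq W n)")
    case True then show ?thesis using Suc by simp
  next
    case False
    note nin = False
    have "z = \<zero>" if z: "z \<in> W" "z \<in> ssum (cseq W n) (line (en n))" for z
    proof -
      obtain c u where h: "c \<in> cseq W n" "u \<in> line (en n)" "z = c \<oplus> u"
        using z(2) unfolding ssum_def by blast
      obtain k where k: "k \<in> K" "u = k \<otimes> en n" using h(2) unfolding line_def by blast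
      have cc: "c \<in> carrier A" using h(1) subsp_carr[OF cseq_subsp] by blast
      have kc: "k \<in> carrier A" using k K_carr by auto
      have zc: "z \<in> carrier A" using z W subsp_carr by blast
      show ?thesis
      proof (cases "k = \<zero>")
        case True
        then have "z = c" using h k cc by (simp add: en_carr)
        then show ?thesis using Suc z h by auto
      next
        case False
        then obtain k' where k': "k' \<in> K" "k' \<otimes> k = \<one>" using K_inv k by blast
        have k'c: "k' \<in> carrier A" using k' K_carr by auto
        have "k \<otimes> en n = z \<ominus> c" using h k cc kc zc en_carr
          by (simp add: minus_eq a_ac r_neg2)
        then have "en n = k' \<otimes> (z \<ominus> c)"
          using k' kc k'c en_carr by (metis l_one m_assoc)
        also have "\<dots> = k' \<otimes> z \<oplus> k' \<otimes> (\<ominus> c)" using k'c zc cc by (simp add: minus_eq r_distr)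
        finally have "en n \<in> ssum W (cseq W n)" unfolding ssum_def
          using subspD(4)[OF W k'(1) z(1)] subspD(4)[OF cseq_subsp k'(1) subsp_neg[OF cseq_subsp h(1)]]
          by blast
        then show ?thesis using nin by simp
      qed
    qed
    moreover have "\<zero> \<in> W \<inter> cseq W (Suc n)" using subspD(2)[OF W] subspD(2)[OF cseq_subsp] by blast
    ultimately show ?thesis using False by auto
  qed
qed

lemma en_in_cseq: assumes "subsp W" shows "en n \<in> ssum W (cseq W (Suc n))"
proof (cases "en n \<in> ssum W (cseq W n)")
  case True then show ?thesis by simp
next
  case False
  have "en n = \<one> \<otimes> en n" using en_carr by simp
  then have "en n \<in> line (en n)" unfolding line_def using K_one by blast
  moreover have "en n = \<zero> \<oplus> en n" using en_carr by simp
  ultimately have "en n \<in> ssum (cseq W n) (line (en n))" unfolding ssum_def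
    using subspD(2)[OF cseq_subsp] by blast
  then have "en n \<in> cseq W (Suc n)" using False by simp
  moreover have "\<zero> \<in> W" using assms subspD(2) by blast
  ultimately show ?thesis using ssum_right[of W "cseq W (Suc n)"] subspD(1)[OF cseq_subsp] by blast
qed

end

lemma (in abelian_group) sw_helper:
  "a \<in> carrier G \<Longrightarrow> b \<in> carrier G \<Longrightarrow> c \<in> carrier G \<Longrightarrow> d \<in> carrier G \<Longrightarrow> a \<oplus> b = c \<oplus> d \<Longrightarrow> a \<ominus> c = d \<ominus> b"
  by (metis (no_types, lifting) ext a_assoc a_comm add.inv_solve_right'
    add.r_inv_ex minus_closed minus_eq minus_equality)

context vsetup begin

lemma complement:
  assumes W: "subsp W"
  shows "\<exists>C. subsp C \<and> W \<inter> C = {\<zero>} \<and> ssum W C = carrier A"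
proof (intro exI conjI)
  let ?C = "\<Union>n. cseq W n"
  have common: "\<exists>n. u \<in> cseq W n \<and> v \<in> cseq W n" if uv: "u \<in> ?C" "v \<in> ?C" for u v
  proof -
    obtain m1 m2 where "u \<in> cseq W m1" "v \<in> cseq W m2" using uv by blast
    then show ?thesis using cseq_mono[of m1 "max m1 m2" W] cseq_mono[of m2 "max m1 m2" W] by auto
  qed
  show "subsp ?C" unfolding subsp_def
  proof (intro conjI ballI)
    show "?C \<subseteq> carrier A" using subsp_carr[OF cseq_subsp] by blast
    show "\<zero> \<in> ?C" using subspD(2)[OF cseq_subsp] by blast
  next
    fix u v assume "u \<in> ?C" "v \<in> ?C"
    then obtain n where "u \<in> cseq W n" "v \<in> cseq W n" using common by blast
    then show "u \<oplus> v \<in> ?C" using subspD(3)[OF cseq_subsp] by blast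
  next
    fix k u assume "k \<in> K" "u \<in> ?C"
    then show "k \<otimes> u \<in> ?C" using subspD(4)[OF cseq_subsp] by blast
  qed
  show "W \<inter> ?C = {\<zero>}" using cseq_disj[OF W] by blast
  show "ssum W ?C = carrier A"
  proof
    show "ssum W ?C \<subseteq> carrier A" using subspD(1)[OF subsp_ssum[OF W \<open>subsp ?C\<close>]] .
    show "carrier A \<subseteq> ssum W ?C"
    proof
      fix v assume "v \<in> carrier A"
      then obtain n where "v = en n" using en_range by (metis rangeE)
      then show "v \<in> ssum W ?C" using en_in_cseq[OF W, of n] ssum_mono[of "cseq W (Suc n)" ?C W] by blast
    qed
  qed
qed

lemma decomp_unique:
  assumes W: "subsp W" and C: "subsp C" and d: "W \<inter> C = {\<zero>}"
    and h: "w1 \<in> W" "c1 \<in> C" "w2 \<in> W" "c2 \<in> C" "w1 \<oplus> c1 = w2 \<oplus> c2"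
  shows "w1 = w2 \<and> c1 = c2"
proof -
  have c: "w1 \<in> carrier A" "c1 \<in> carrier A" "w2 \<in> carrier A" "c2 \<in> carrier A"
    using h W C subsp_carr by auto
  have "w1 \<ominus> w2 = c2 \<ominus> c1" using sw_helper[OF c(1,2,3,4) h(5)] .
  moreover have "w1 \<ominus> w2 \<in> W" using subsp_minus[OF W h(1,3)] .
  moreover have "c2 \<ominus> c1 \<in> C" using subsp_minus[OF C h(4,2)] .
  ultimately have "w1 \<ominus> w2 = \<zero>" "c2 \<ominus> c1 = \<zero>" using d by auto
  then show ?thesis using c by (metis r_right_minus_eq)
qed

lemma linD:
  assumes "lin f"
  shows "\<And>v. v \<in> carrier A \<Longrightarrow> f v \<in> carrier A"
    "\<And>u v. u \<in> carrier A \<Longrightarrow> v \<in> carrier A \<Longrightarrow> f (u \<oplus> v) = f u \<oplus> f v"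
    "\<And>k v. k \<in> K \<Longrightarrow> v \<in> carrier A \<Longrightarrow> f (k \<otimes> v) = k \<otimes> f v"
  using assms unfolding lin_def by auto

lemma lin_zero: assumes "lin f" shows "f \<zero> = \<zero>"
proof -
  have "f (\<zero> \<otimes> \<zero>) = \<zero> \<otimes> f \<zero>" using linD(3)[OF assms K_zero] by simp
  then show ?thesis using linD(1)[OF assms] by simp
qed

lemma lin_minus: assumes "lin f" "u \<in> carrier A" "v \<in> carrier A" shows "f (u \<ominus> v) = f u \<ominus> f v"
proof -
  have fv: "f v \<in> carrier A" using linD(1)[OF assms(1,3)] .
  have "u \<ominus> v = u \<oplus> (\<ominus> \<one>) \<otimes> v" using assms(3) by (simp add: minus_eq l_minus)
  then have "f (u \<ominus> v) = f u \<oplus> f ((\<ominus> \<one>) \<otimes> v)" using linD(2)[OF assms(1) assms(2)] assms(3) by simp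
  also have "f ((\<ominus> \<one>) \<otimes> v) = (\<ominus> \<one>) \<otimes> f v" using linD(3)[OF assms(1) K_neg[OF K_one] assms(3)] .
  also have "\<dots> = \<ominus> f v" using fv by (simp add: l_minus)
  finally show ?thesis by (simp add: minus_eq)
qed

lemma subsp_image: assumes "lin f" shows "subsp (f ` carrier A)"
  unfolding subsp_def
proof (intro conjI ballI)
  show "f ` carrier A \<subseteq> carrier A" using linD(1)[OF assms] by auto
  show "\<zero> \<in> f ` carrier A" using lin_zero[OF assms] by force
next
  fix u v assume "u \<in> f ` carrier A" "v \<in> f ` carrier A"
  then obtain a b where ab: "a \<in> carrier A" "b \<in> carrier A" "u = f a" "v = f b" by blast
  then have "u \<oplus> v = f (a \<oplus> b)" using linD(2)[OF assms] by simp
  then show "u \<oplus> v \<in> f ` carrier A" using ab by blast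
next
  fix k u assume k: "k \<in> K" and "u \<in> f ` carrier A"
  then obtain a where ab: "a \<in> carrier A" "u = f a" by blast
  then have "k \<otimes> u = f (k \<otimes> a)" using linD(3)[OF assms k] by simp
  then show "k \<otimes> u \<in> f ` carrier A" using ab k K_carr by blast
qed

lemma subsp_kernel: assumes "lin f" shows "subsp {v \<in> carrier A. f v = \<zero>}"
  unfolding subsp_def
proof (intro conjI ballI)
  show "{v \<in> carrier A. f v = \<zero>} \<subseteq> carrier A" by blast
  show "\<zero> \<in> {v \<in> carrier A. f v = \<zero>}" using lin_zero[OF assms] by simp
next
  fix u v assume "u \<in> {v \<in> carrier A. f v = \<zero>}" "v \<in> {v \<in> carrier A. f v = \<zero>}"
  then show "u \<oplus> v \<in> {v \<in> carrier A. f v = \<zero>}" using linD(2)[OF assms] by simp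
next
  fix k u assume k: "k \<in> K" and "u \<in> {v \<in> carrier A. f v = \<zero>}"
  then show "k \<otimes> u \<in> {v \<in> carrier A. f v = \<zero>}" using linD(3)[OF assms k] K_carr[OF k] by simp
qed

lemma quasi_inverse:
  assumes f: "lin f"
  shows "\<exists>g. lin g \<and> (\<forall>v\<in>carrier A. f (g (f v)) = f v)"
proof -
  let ?W = "f ` carrier A" and ?N = "{v \<in> carrier A. f v = \<zero>}"
  have W: "subsp ?W" and N: "subsp ?N" using subsp_image[OF f] subsp_kernel[OF f] .
  obtain C where C: "subsp C" "?W \<inter> C = {\<zero>}" "ssum ?W C = carrier A" using complement[OF W] by blast
  obtain D where D: "subsp D" "?N \<inter> D = {\<zero>}" "ssum ?N D = carrier A" using complement[OF N] by blast
  define P where "P v d \<longleftrightarrow> d \<in> D \<and> (\<exists>c\<in>C. v = f d \<oplus> c)" for v d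
  have ex: "\<exists>d. P v d" if v: "v \<in> carrier A" for v
  proof -
    obtain w c where wc: "w \<in> ?W" "c \<in> C" "v = w \<oplus> c" using v C(3) unfolding ssum_def by blast
    obtain u where u: "u \<in> carrier A" "w = f u" using wc by blast
    obtain n d where nd: "n \<in> ?N" "d \<in> D" "u = n \<oplus> d" using u D(3) unfolding ssum_def by blast
    have "f u = f d" using nd subsp_carr[OF D(1)] linD[OF f] by auto
    then have "v = f d \<oplus> c" using wc u by simp
    then show ?thesis unfolding P_def using nd wc by blast
  qed
  have un: "d1 = d2" if pp: "P v d1" "P v d2" for v d1 d2
  proof -
    obtain c1 c2 where h: "d1 \<in> D" "d2 \<in> D" "c1 \<in> C" "c2 \<in> C" "v = f d1 \<oplus> c1" "v = f d2 \<oplus> c2"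
      using pp unfolding P_def by blast
    have dc: "d1 \<in> carrier A" "d2 \<in> carrier A" using h subsp_carr[OF D(1)] by auto
    have "f d1 = f d2" using decomp_unique[OF W C(1,2), of "f d1" c1 "f d2" c2] h dc by auto
    then have "f (d1 \<ominus> d2) = \<zero>" using lin_minus[OF f dc] linD(1)[OF f] dc by simp
    then have "d1 \<ominus> d2 \<in> ?N \<inter> D" using subsp_minus[OF D(1) h(1,2)] dc by auto
    then show ?thesis using D(2) dc by (metis r_right_minus_eq singletonD)
  qed
  define g where "g v = (SOME d. P v d)" for v
  have gP: "P v (g v)" if "v \<in> carrier A" for v unfolding g_def using ex[OF that] by (rule someI_ex)
  have gu: "g v = d" if "v \<in> carrier A" "P v d" for v d using un gP that by blast
  have gc: "g v \<in> carrier A" if "v \<in> carrier A" for v using gP[OF that] subsp_carr[OF D(1)] unfolding P_def by blast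
  have "lin g" unfolding lin_def
  proof (intro conjI ballI)
    fix v assume "v \<in> carrier A" then show "g v \<in> carrier A" by (rule gc)
  next
    fix u v assume u: "u \<in> carrier A" and v: "v \<in> carrier A"
    obtain cu where cu: "g u \<in> D" "cu \<in> C" "u = f (g u) \<oplus> cu" using gP[OF u] unfolding P_def by blast
    obtain cv where cv: "g v \<in> D" "cv \<in> C" "v = f (g v) \<oplus> cv" using gP[OF v] unfolding P_def by blast
    have cc: "cu \<in> carrier A" "cv \<in> carrier A" using cu cv subsp_carr[OF C(1)] by auto
    have fc: "f (g u) \<in> carrier A" "f (g v) \<in> carrier A" using gc u v linD(1)[OF f] by auto
    have "u \<oplus> v = (f (g u) \<oplus> cu) \<oplus> (f (g v) \<oplus> cv)"
      by (simp only: cu(3)[symmetric] cv(3)[symmetric])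
    also have "\<dots> = (f (g u) \<oplus> f (g v)) \<oplus> (cu \<oplus> cv)" using cc fc by (simp add: a_ac)
    also have "\<dots> = f (g u \<oplus> g v) \<oplus> (cu \<oplus> cv)" using linD(2)[OF f gc[OF u] gc[OF v]] by simp
    finally have "u \<oplus> v = f (g u \<oplus> g v) \<oplus> (cu \<oplus> cv)" .
    moreover have "g u \<oplus> g v \<in> D" "cu \<oplus> cv \<in> C" using cu cv subspD(3) D(1) C(1) by auto
    ultimately have "P (u \<oplus> v) (g u \<oplus> g v)" unfolding P_def by blast
    then show "g (u \<oplus> v) = g u \<oplus> g v" using gu u v by blast
  next
    fix k v assume k: "k \<in> K" and v: "v \<in> carrier A"
    obtain cv where cv: "g v \<in> D" "cv \<in> C" "v = f (g v) \<oplus> cv" using gP[OF v] unfolding P_def by blast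
    have cc: "cv \<in> carrier A" using cv subsp_carr[OF C(1)] by auto
    have fc: "f (g v) \<in> carrier A" using gc v linD(1)[OF f] by auto
    have "k \<otimes> v = k \<otimes> (f (g v) \<oplus> cv)" by (simp only: cv(3)[symmetric])
    also have "\<dots> = k \<otimes> f (g v) \<oplus> k \<otimes> cv" using cc fc K_carr[OF k] by (simp add: r_distr)
    also have "\<dots> = f (k \<otimes> g v) \<oplus> k \<otimes> cv" using linD(3)[OF f k gc[OF v]] by simp
    finally have "k \<otimes> v = f (k \<otimes> g v) \<oplus> k \<otimes> cv" .
    moreover have "k \<otimes> g v \<in> D" "k \<otimes> cv \<in> C" using cv k subspD(4) D(1) C(1) by auto
    ultimately have "P (k \<otimes> v) (k \<otimes> g v)" unfolding P_def by blast
    then show "g (k \<otimes> v) = k \<otimes> g v" using gu v k K_carr by blast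
  qed
  moreover have "f (g (f v)) = f v" if v: "v \<in> carrier A" for v
  proof -
    have fv: "f v \<in> carrier A" using linD(1)[OF f v] .
    obtain c where c: "g (f v) \<in> D" "c \<in> C" "f v = f (g (f v)) \<oplus> c" using gP[OF fv] unfolding P_def by blast
    have "f v = f v \<oplus> \<zero>" using fv by simp
    then show ?thesis using decomp_unique[OF W C(1,2), of "f (g (f v))" c "f v" \<zero>] c v gc[OF fv] subspD(2)[OF C(1)]
      by auto
  qed
  ultimately show ?thesis by blast
qed

end

context vsetup begin

definition Emap :: "('a \<Rightarrow> 'a) ring" where
  "Emap = \<lparr>carrier = {f. lin f \<and> f \<in> extensional (carrier A)},
     monoid.mult = (\<lambda>f g. \<lambda>v\<in>carrier A. f (g v)), one = (\<lambda>v\<in>carrier A. v),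
     ring.zero = (\<lambda>v\<in>carrier A. \<zero>), add = (\<lambda>f g. \<lambda>v\<in>carrier A. f v \<oplus> g v)\<rparr>"

lemma E_simps:
  "carrier Emap = {f. lin f \<and> f \<in> extensional (carrier A)}"
  "f \<otimes>\<^bsub>Emap\<^esub> g = (\<lambda>v\<in>carrier A. f (g v))"
  "\<one>\<^bsub>Emap\<^esub> = (\<lambda>v\<in>carrier A. v)"
  "\<zero>\<^bsub>Emap\<^esub> = (\<lambda>v\<in>carrier A. \<zero>)"
  "f \<oplus>\<^bsub>Emap\<^esub> g = (\<lambda>v\<in>carrier A. f v \<oplus> g v)"
  unfolding Emap_def by simp_all

lemma lin_add: assumes "lin f" "lin g" shows "lin (\<lambda>v\<in>carrier A. f v \<oplus> g v)"
  unfolding lin_def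
proof (intro conjI ballI)
  fix v assume "v \<in> carrier A" then show "(\<lambda>v\<in>carrier A. f v \<oplus> g v) v \<in> carrier A"
    using linD(1)[OF assms(1)] linD(1)[OF assms(2)] by simp
next
  fix u v assume u: "u \<in> carrier A" and v: "v \<in> carrier A"
  have c: "f u \<in> carrier A" "f v \<in> carrier A" "g u \<in> carrier A" "g v \<in> carrier A"
    using u v linD(1)[OF assms(1)] linD(1)[OF assms(2)] by auto
  show "(\<lambda>v\<in>carrier A. f v \<oplus> g v) (u \<oplus> v) = (\<lambda>v\<in>carrier A. f v \<oplus> g v) u \<oplus> (\<lambda>v\<in>carrier A. f v \<oplus> g v) v"
    using u v c linD(2)[OF assms(1) u v] linD(2)[OF assms(2) u v] by (simp add: a_ac)
next
  fix k v assume k: "k \<in> K" and v: "v \<in> carrier A"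
  have c: "f v \<in> carrier A" "g v \<in> carrier A" using v linD(1)[OF assms(1)] linD(1)[OF assms(2)] by auto
  show "(\<lambda>v\<in>carrier A. f v \<oplus> g v) (k \<otimes> v) = k \<otimes> (\<lambda>v\<in>carrier A. f v \<oplus> g v) v"
    using v c k K_carr[OF k] linD(3)[OF assms(1) k v] linD(3)[OF assms(2) k v] by (simp add: r_distr)
qed

lemma lin_comp: assumes "lin f" "lin g" shows "lin (\<lambda>v\<in>carrier A. f (g v))"
  unfolding lin_def
proof (intro conjI ballI)
  fix v assume "v \<in> carrier A" then show "(\<lambda>v\<in>carrier A. f (g v)) v \<in> carrier A"
    using linD(1)[OF assms(1)] linD(1)[OF assms(2)] by simp
next
  fix u v assume u: "u \<in> carrier A" and v: "v \<in> carrier A"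
  show "(\<lambda>v\<in>carrier A. f (g v)) (u \<oplus> v) = (\<lambda>v\<in>carrier A. f (g v)) u \<oplus> (\<lambda>v\<in>carrier A. f (g v)) v"
    using u v linD(2)[OF assms(2) u v] linD(2)[OF assms(1)] linD(1)[OF assms(2)] by simp
next
  fix k v assume k: "k \<in> K" and v: "v \<in> carrier A"
  show "(\<lambda>v\<in>carrier A. f (g v)) (k \<otimes> v) = k \<otimes> (\<lambda>v\<in>carrier A. f (g v)) v"
    using v k K_carr[OF k] linD(3)[OF assms(2) k v] linD(3)[OF assms(1) k] linD(1)[OF assms(2)] by simp
qed

lemma lin_id: "lin (\<lambda>v\<in>carrier A. v)"
  unfolding lin_def using K_carr by auto

lemma lin_zmap: "lin (\<lambda>v\<in>carrier A. \<zero>)"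
  unfolding lin_def using K_carr by auto

lemma lin_neg: assumes "lin f" shows "lin (\<lambda>v\<in>carrier A. \<ominus> f v)"
  unfolding lin_def
proof (intro conjI ballI)
  fix v assume "v \<in> carrier A" then show "(\<lambda>v\<in>carrier A. \<ominus> f v) v \<in> carrier A"
    using linD(1)[OF assms(1)] by simp
next
  fix u v assume u: "u \<in> carrier A" and v: "v \<in> carrier A"
  have c: "f u \<in> carrier A" "f v \<in> carrier A" using u v linD(1)[OF assms(1)] by auto
  show "(\<lambda>v\<in>carrier A. \<ominus> f v) (u \<oplus> v) = (\<lambda>v\<in>carrier A. \<ominus> f v) u \<oplus> (\<lambda>v\<in>carrier A. \<ominus> f v) v"
    using u v c linD(2)[OF assms(1) u v] by (simp add: minus_add a_comm)
next
  fix k v assume k: "k \<in> K" and v: "v \<in> carrier A"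
  have c: "f v \<in> carrier A" using v linD(1)[OF assms(1)] by auto
  show "(\<lambda>v\<in>carrier A. \<ominus> f v) (k \<otimes> v) = k \<otimes> (\<lambda>v\<in>carrier A. \<ominus> f v) v"
    using v c k K_carr[OF k] linD(3)[OF assms(1) k v] by (simp add: r_minus)
qed

lemma E_eqI: "f \<in> extensional (carrier A) \<Longrightarrow> g \<in> extensional (carrier A) \<Longrightarrow> (\<And>v. v \<in> carrier A \<Longrightarrow> f v = g v) \<Longrightarrow> f = g"
  by (rule extensionalityI)

lemma E_carrD: "f \<in> carrier Emap \<Longrightarrow> lin f" "f \<in> carrier Emap \<Longrightarrow> f \<in> extensional (carrier A)"
  by (simp_all add: E_simps)

lemma ring_E: "ring Emap"
proof (rule ringI)
  show "abelian_group Emap"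
  proof (rule abelian_groupI)
    fix f g assume "f \<in> carrier Emap" "g \<in> carrier Emap"
    then show "f \<oplus>\<^bsub>Emap\<^esub> g \<in> carrier Emap" by (simp add: E_simps lin_add)
  next
    show "\<zero>\<^bsub>Emap\<^esub> \<in> carrier Emap" by (simp add: E_simps lin_zmap)
  next
    fix f g h assume a: "f \<in> carrier Emap" "g \<in> carrier Emap" "h \<in> carrier Emap"
    note l = linD(1)[OF E_carrD(1)[OF a(1)]] linD(1)[OF E_carrD(1)[OF a(2)]] linD(1)[OF E_carrD(1)[OF a(3)]]
    show "f \<oplus>\<^bsub>Emap\<^esub> g \<oplus>\<^bsub>Emap\<^esub> h = f \<oplus>\<^bsub>Emap\<^esub> (g \<oplus>\<^bsub>Emap\<^esub> h)"
      unfolding E_simps by (rule E_eqI) (simp_all add: l a_assoc)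
  next
    fix f g assume a: "f \<in> carrier Emap" "g \<in> carrier Emap"
    note l = linD(1)[OF E_carrD(1)[OF a(1)]] linD(1)[OF E_carrD(1)[OF a(2)]]
    show "f \<oplus>\<^bsub>Emap\<^esub> g = g \<oplus>\<^bsub>Emap\<^esub> f"
      unfolding E_simps by (rule E_eqI) (simp_all add: l a_comm)
  next
    fix f assume f: "f \<in> carrier Emap"
    note l = linD(1)[OF E_carrD(1)[OF f]]
    note e = E_carrD(2)[OF f]
    show "\<zero>\<^bsub>Emap\<^esub> \<oplus>\<^bsub>Emap\<^esub> f = f"
      unfolding E_simps by (rule E_eqI) (simp_all add: l e)
    have "(\<lambda>v\<in>carrier A. \<ominus> f v) \<in> carrier Emap" using f by (simp add: E_simps lin_neg)
    moreover have "(\<lambda>v\<in>carrier A. \<ominus> f v) \<oplus>\<^bsub>Emap\<^esub> f = \<zero>\<^bsub>Emap\<^esub>"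
      unfolding E_simps by (rule E_eqI) (simp_all add: l l_neg)
    ultimately show "\<exists>y\<in>carrier Emap. y \<oplus>\<^bsub>Emap\<^esub> f = \<zero>\<^bsub>Emap\<^esub>" by blast
  qed
next
  show "monoid Emap"
  proof (rule monoidI)
    fix f g assume "f \<in> carrier Emap" "g \<in> carrier Emap"
    then show "f \<otimes>\<^bsub>Emap\<^esub> g \<in> carrier Emap" by (simp add: E_simps lin_comp)
  next
    show "\<one>\<^bsub>Emap\<^esub> \<in> carrier Emap" by (simp add: E_simps lin_id)
  next
    fix f g h assume a: "f \<in> carrier Emap" "g \<in> carrier Emap" "h \<in> carrier Emap"
    note l = linD(1)[OF E_carrD(1)[OF a(1)]] linD(1)[OF E_carrD(1)[OF a(2)]] linD(1)[OF E_carrD(1)[OF a(3)]]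
    show "f \<otimes>\<^bsub>Emap\<^esub> g \<otimes>\<^bsub>Emap\<^esub> h = f \<otimes>\<^bsub>Emap\<^esub> (g \<otimes>\<^bsub>Emap\<^esub> h)"
      unfolding E_simps by (rule E_eqI) (simp_all add: l)
  next
    fix f assume f: "f \<in> carrier Emap"
    note l = linD(1)[OF E_carrD(1)[OF f]]
    note e = E_carrD(2)[OF f]
    show "\<one>\<^bsub>Emap\<^esub> \<otimes>\<^bsub>Emap\<^esub> f = f"
      unfolding E_simps by (rule E_eqI) (simp_all add: l e)
    show "f \<otimes>\<^bsub>Emap\<^esub> \<one>\<^bsub>Emap\<^esub> = f"
      unfolding E_simps by (rule E_eqI) (simp_all add: l e)
  qed
next
  fix f g h assume a: "f \<in> carrier Emap" "g \<in> carrier Emap" "h \<in> carrier Emap"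
  note l = linD(1)[OF E_carrD(1)[OF a(1)]] linD(1)[OF E_carrD(1)[OF a(2)]] linD(1)[OF E_carrD(1)[OF a(3)]]
  note l2 = linD(2)[OF E_carrD(1)[OF a(3)]]
  show "(f \<oplus>\<^bsub>Emap\<^esub> g) \<otimes>\<^bsub>Emap\<^esub> h = f \<otimes>\<^bsub>Emap\<^esub> h \<oplus>\<^bsub>Emap\<^esub> g \<otimes>\<^bsub>Emap\<^esub> h"
    unfolding E_simps by (rule E_eqI) (simp_all add: l)
  show "h \<otimes>\<^bsub>Emap\<^esub> (f \<oplus>\<^bsub>Emap\<^esub> g) = h \<otimes>\<^bsub>Emap\<^esub> f \<oplus>\<^bsub>Emap\<^esub> h \<otimes>\<^bsub>Emap\<^esub> g"
    unfolding E_simps by (rule E_eqI) (simp_all add: l l2)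
qed

lemma vnr_E: "von_neumann_regular Emap"
  unfolding von_neumann_regular_def
proof (intro conjI ballI)
  show "ring Emap" by (rule ring_E)
  fix f assume f: "f \<in> carrier Emap"
  then have lf: "lin f" and ef: "f \<in> extensional (carrier A)" by (auto simp: E_simps)
  obtain g where g: "lin g" "\<forall>v\<in>carrier A. f (g (f v)) = f v" using quasi_inverse[OF lf] by blast
  let ?g = "\<lambda>v\<in>carrier A. g v"
  have "?g \<in> carrier Emap" using g(1) K_carr by (auto simp: E_simps lin_def)
  moreover have "f = f \<otimes>\<^bsub>Emap\<^esub> ?g \<otimes>\<^bsub>Emap\<^esub> f"
    unfolding E_simps by (rule E_eqI) (simp_all add: ef g linD(1)[OF lf] linD(1)[OF g(1)])
  ultimately show "\<exists>y\<in>carrier Emap. f = f \<otimes>\<^bsub>Emap\<^esub> y \<otimes>\<^bsub>Emap\<^esub> f" by blast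
qed

definition Lmap :: "'a \<Rightarrow> ('a \<Rightarrow> 'a)" where "Lmap a = (\<lambda>v\<in>carrier A. a \<otimes> v)"

lemma lin_L: assumes a: "a \<in> carrier A" shows "lin (Lmap a)"
  unfolding lin_def Lmap_def
proof (intro conjI ballI)
  fix k v assume k: "k \<in> K" and v: "v \<in> carrier A"
  have "a \<otimes> (k \<otimes> v) = (a \<otimes> k) \<otimes> v" using a v K_carr[OF k] by (simp add: m_assoc)
  also have "\<dots> = (k \<otimes> a) \<otimes> v" using K_central[OF k a] by simp
  also have "\<dots> = k \<otimes> (a \<otimes> v)" using a v K_carr[OF k] by (simp add: m_assoc)
  finally show "(\<lambda>v\<in>carrier A. a \<otimes> v) (k \<otimes> v) = k \<otimes> (\<lambda>v\<in>carrier A. a \<otimes> v) v"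
    using a v K_carr[OF k] by simp
qed (use a in \<open>auto simp: r_distr\<close>)

lemma L_hom: "Lmap \<in> ring_hom A Emap"
proof (rule ring_hom_memI)
  fix a assume "a \<in> carrier A" then show "Lmap a \<in> carrier Emap"
    using lin_L by (simp add: E_simps Lmap_def)
next
  fix a b assume "a \<in> carrier A" "b \<in> carrier A"
  then show "Lmap (a \<otimes> b) = Lmap a \<otimes>\<^bsub>Emap\<^esub> Lmap b" "Lmap (a \<oplus> b) = Lmap a \<oplus>\<^bsub>Emap\<^esub> Lmap b"
    by (auto simp: E_simps Lmap_def m_assoc l_distr intro!: E_eqI)
next
  show "Lmap \<one> = \<one>\<^bsub>Emap\<^esub>" by (auto simp: E_simps Lmap_def intro!: E_eqI)
qed

lemma L_inj: "inj_on Lmap (carrier A)"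
proof (rule inj_onI)
  fix a b assume "a \<in> carrier A" "b \<in> carrier A" "Lmap a = Lmap b"
  then have "Lmap a \<one> = Lmap b \<one>" by simp
  then show "a = b" using \<open>a \<in> carrier A\<close> \<open>b \<in> carrier A\<close> by (simp add: Lmap_def)
qed

end

primrec tower :: "('x \<Rightarrow> 'x) \<Rightarrow> ('x, 'y) ring_scheme \<Rightarrow> 'x set \<Rightarrow> nat \<Rightarrow> 'x set" where
  "tower q E S 0 = S"
| "tower q E S (Suc n) = generate_ring E (tower q E S n \<union> q ` tower q E S n)"

lemma tower_props:
  fixes E (structure)
  assumes E: "ring E" and S: "S \<subseteq> carrier E" "countable S"
    and q: "\<And>f. f \<in> carrier E \<Longrightarrow> q f \<in> carrier E \<and> f = f \<otimes> q f \<otimes> f"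
  defines "T \<equiv> \<Union>n. tower q E S n"
  shows "subring T E" "countable T" "S \<subseteq> T" "von_neumann_regular (E\<lparr>carrier := T\<rparr>)"
proof -
  interpret ring E by fact
  have carr: "tower q E S n \<subseteq> carrier E" for n
  proof (induction n)
    case 0 then show ?case using S by simp
  next
    case (Suc n)
    then have "tower q E S n \<union> q ` tower q E S n \<subseteq> carrier E" using q by blast
    then show ?case by (simp add: generate_ring_incl)
  qed
  have step: "tower q E S n \<subseteq> tower q E S (Suc n)" for n
    by (auto intro: generate_ring.incl)
  have mono: "m \<le> n \<Longrightarrow> tower q E S m \<subseteq> tower q E S n" for m n
    by (rule lift_Suc_mono_le[of "tower q E S", OF step])
  have qstep: "q f \<in> tower q E S (Suc n)" if "f \<in> tower q E S n" for f n
    using that by (auto intro: generate_ring.incl)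
  have cnt: "countable (tower q E S n)" for n
    by (induction n) (auto simp: S intro!: countable_generate_ring)
  show "countable T" unfolding T_def using cnt by auto
  show "S \<subseteq> T" unfolding T_def using tower.simps(1)[of q E S] by blast
  have common: "\<exists>n. a \<in> tower q E S n \<and> b \<in> tower q E S n" if ab: "a \<in> T" "b \<in> T" for a b
  proof -
    obtain m1 m2 where "a \<in> tower q E S m1" "b \<in> tower q E S m2" using ab unfolding T_def by blast
    then show ?thesis using mono[of m1 "max m1 m2"] mono[of m2 "max m1 m2"] by auto
  qed
  show sub: "subring T E"
  proof (rule subringI)
    show "T \<subseteq> carrier E" unfolding T_def using carr by blast
    have "\<one> \<in> tower q E S 1" by (simp add: generate_ring.one)
    then show "\<one> \<in> T" unfolding T_def by blast
  next
    fix h assume "h \<in> T"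
    then obtain n where "h \<in> tower q E S n" unfolding T_def by blast
    then have "\<ominus> h \<in> tower q E S (Suc n)" by (auto intro: generate_ring.a_inv generate_ring.incl)
    then show "\<ominus> h \<in> T" unfolding T_def by blast
  next
    fix h1 h2 assume "h1 \<in> T" "h2 \<in> T"
    then obtain n where n: "h1 \<in> tower q E S n" "h2 \<in> tower q E S n" using common by blast
    then have "h1 \<otimes> h2 \<in> tower q E S (Suc n)" "h1 \<oplus> h2 \<in> tower q E S (Suc n)"
      by (auto intro: generate_ring.eng_mult generate_ring.eng_add generate_ring.incl)
    then show "h1 \<otimes> h2 \<in> T" "h1 \<oplus> h2 \<in> T" unfolding T_def by blast+
  qed
  show "von_neumann_regular (E\<lparr>carrier := T\<rparr>)"
    unfolding von_neumann_regular_def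
  proof (intro conjI ballI)
    show "ring (E\<lparr>carrier := T\<rparr>)" using subring_is_ring[OF sub] .
    fix f assume "f \<in> carrier (E\<lparr>carrier := T\<rparr>)"
    then obtain n where n: "f \<in> tower q E S n" unfolding T_def by auto
    then have "q f \<in> T" using qstep unfolding T_def by blast
    moreover have "f = f \<otimes> q f \<otimes> f" using q carr n by blast
    ultimately show "\<exists>y\<in>carrier (E\<lparr>carrier := T\<rparr>). f = f \<otimes>\<^bsub>E\<lparr>carrier := T\<rparr>\<^esub> y \<otimes>\<^bsub>E\<lparr>carrier := T\<rparr>\<^esub> f"
      by auto
  qed
qed

theorem mainTheorem9:
  fixes F :: "('f, 'c) ring_scheme" and A :: "('a, 'b) ring_scheme"
    and phi :: "'f \<Rightarrow> 'a" and x y :: 'a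
  assumes F_prime: "F \<simeq> rat_ring \<or> (\<exists>p::nat. Factorial_Ring.prime p \<and> F \<simeq> ZFact (int p))"
    and alg: "algebra_via F A phi"
    and primeA: "prime_ring A"
    and xy: "x \<in> carrier A" "y \<in> carrier A"
    and gen: "generate_ring A (phi ` carrier F \<union> {x, y}) = carrier A"
    and pnx: "principally_nilpotent A x"
    and pny: "principally_nilpotent A y"
    and mnn: "minimal_non_nilpotent A (x \<oplus>\<^bsub>A\<^esub> y)"
    and J: "{x \<otimes>\<^bsub>A\<^esub> a \<oplus>\<^bsub>A\<^esub> y \<otimes>\<^bsub>A\<^esub> b | a b. a \<in> carrier A \<and> b \<in> carrier A}
              = jacobson_radical A"
    and uniq_r: "{I. maximal_right_ideal I A} = {jacobson_radical A}"
    and uniq_l: "{I. maximal_left_ideal I A} = {jacobson_radical A}"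
  shows "\<exists>(R :: nat ring) h. ring R \<and> countable (carrier R) \<and> prime_ring R \<and>
           von_neumann_regular R \<and> h \<in> ring_hom A R \<and> inj_on h (carrier A) \<and>
           (\<forall>J. ideal J R \<and> J \<noteq> {\<zero>\<^bsub>R\<^esub>} \<longrightarrow> J \<inter> h ` carrier A \<noteq> {\<zero>\<^bsub>R\<^esub>})"
proof -
  have Fd: "field F" and Ar: "ring A" and phi: "phi \<in> ring_hom F A"
    and cen: "\<And>c a. c \<in> carrier F \<Longrightarrow> a \<in> carrier A \<Longrightarrow> phi c \<otimes>\<^bsub>A\<^esub> a = a \<otimes>\<^bsub>A\<^esub> phi c"
    using alg unfolding algebra_via_def by auto
  interpret A: ring A by fact
  interpret Fd: field F by fact
  interpret PH: ring_hom_ring F A phi using Fd.ring_axioms Ar phi by (rule ring_hom_ringI2)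
  define K where "K = phi ` carrier F"
  have cntF: "countable (carrier F)"
    using F_prime
  proof
    assume "F \<simeq> rat_ring"
    then obtain g where g: "g \<in> ring_iso F rat_ring" unfolding is_ring_iso_def by blast
    then have "inj_on g (carrier F)" unfolding ring_iso_def bij_betw_def by auto
    then show ?thesis by (rule countable_image_inj_on[OF countableI_type])
  next
    assume "\<exists>p::nat. Factorial_Ring.prime p \<and> F \<simeq> ZFact (int p)"
    then obtain p :: nat where "F \<simeq> ZFact (int p)" by blast
    then obtain g where g: "g \<in> ring_iso F (ZFact (int p))" unfolding is_ring_iso_def by blast
    then have inj: "inj_on g (carrier F)" and im: "g ` carrier F = carrier (ZFact (int p))"
      unfolding ring_iso_def bij_betw_def by auto
    have "carrier (ZFact (int p)) = (\<Union>a\<in>carrier \<Z>. {Idl\<^bsub>\<Z>\<^esub> {int p} +>\<^bsub>\<Z>\<^esub> a})"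
      unfolding ZFact_def FactRing_def A_RCOSETS_def' by simp
    then have "countable (carrier (ZFact (int p)))" by simp
    then show ?thesis using inj im countable_image_inj_on by metis
  qed
  have cntA: "countable (carrier A)"
  proof -
    have "countable (phi ` carrier F \<union> {x, y})" using cntF by simp
    then show ?thesis using gen countable_generate_ring by metis
  qed
  have Vs: "vsetup A K"
  proof (intro vsetup.intro vsetup_axioms.intro Ar)
    show "K \<subseteq> carrier A" unfolding K_def by auto
    show "\<one>\<^bsub>A\<^esub> \<in> K" unfolding K_def using PH.hom_one Fd.one_closed by (metis image_eqI)
    fix k l assume "k \<in> K" "l \<in> K"
    then obtain c d where cd: "c \<in> carrier F" "d \<in> carrier F" "k = phi c" "l = phi d" unfolding K_def by blast
    show "k \<oplus>\<^bsub>A\<^esub> l \<in> K" unfolding K_def using cd by (metis Fd.add.m_closed PH.hom_add image_eqI)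
    show "k \<otimes>\<^bsub>A\<^esub> l \<in> K" unfolding K_def using cd by (metis Fd.m_closed PH.hom_mult image_eqI)
  next
    fix k assume "k \<in> K"
    then obtain c where c: "c \<in> carrier F" "k = phi c" unfolding K_def by blast
    show "\<ominus>\<^bsub>A\<^esub> k \<in> K" unfolding K_def using c by (metis Fd.add.inv_closed PH.hom_a_inv image_eqI)
  next
    fix k a assume "k \<in> K" "a \<in> carrier A"
    then show "k \<otimes>\<^bsub>A\<^esub> a = a \<otimes>\<^bsub>A\<^esub> k" unfolding K_def using cen by blast
  next
    fix k assume "k \<in> K" "k \<noteq> \<zero>\<^bsub>A\<^esub>"
    then obtain c where c: "c \<in> carrier F" "k = phi c" "phi c \<noteq> \<zero>\<^bsub>A\<^esub>" unfolding K_def by blast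
    then have "c \<noteq> \<zero>\<^bsub>F\<^esub>" using PH.hom_zero by auto
    then have u: "c \<in> Units F" using c Fd.field_Units by blast
    have "phi (inv\<^bsub>F\<^esub> c) \<otimes>\<^bsub>A\<^esub> phi c = \<one>\<^bsub>A\<^esub>"
      using u c by (metis Fd.Units_inv_closed Fd.Units_l_inv PH.hom_mult PH.hom_one Fd.Units_closed)
    moreover have "phi (inv\<^bsub>F\<^esub> c) \<in> K" unfolding K_def using u by (metis Fd.Units_inv_closed image_eqI)
    ultimately show "\<exists>k'\<in>K. k' \<otimes>\<^bsub>A\<^esub> k = \<one>\<^bsub>A\<^esub>" using c by blast
  next
    show "countable (carrier A)" by (rule cntA)
  qed
  interpret V: vsetup A K by (rule Vs)
  let ?E = "V.Emap" and ?L = "V.Lmap"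
  have Er: "ring ?E" by (rule V.ring_E)
  interpret E: ring ?E by (rule Er)
  define q where "q f = (SOME g. g \<in> carrier ?E \<and> f = f \<otimes>\<^bsub>?E\<^esub> g \<otimes>\<^bsub>?E\<^esub> f)" for f
  have q: "q f \<in> carrier ?E \<and> f = f \<otimes>\<^bsub>?E\<^esub> q f \<otimes>\<^bsub>?E\<^esub> f" if "f \<in> carrier ?E" for f
  proof -
    have "\<exists>g. g \<in> carrier ?E \<and> f = f \<otimes>\<^bsub>?E\<^esub> g \<otimes>\<^bsub>?E\<^esub> f"
      using V.vnr_E that unfolding von_neumann_regular_def by blast
    then show ?thesis unfolding q_def by (rule someI_ex)
  qed
  have Lhom: "?L \<in> ring_hom A ?E" by (rule V.L_hom)
  have LS: "?L ` carrier A \<subseteq> carrier ?E" using ring_hom_closed[OF Lhom] by blast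
  define T where "T = (\<Union>n. tower q ?E (?L ` carrier A) n)"
  have subT: "subring T ?E" and cntT: "countable T" and LT: "?L ` carrier A \<subseteq> T"
    and vnrT: "von_neumann_regular (?E\<lparr>carrier := T\<rparr>)"
    using tower_props[OF Er LS countable_image[OF cntA] q] unfolding T_def by auto
  define T' where "T' = ?E\<lparr>carrier := T\<rparr>"
  have T'r: "ring T'" unfolding T'_def by (rule E.subring_is_ring[OF subT])
  interpret T': ring T' by (rule T'r)
  have T'simps: "carrier T' = T" "\<zero>\<^bsub>T'\<^esub> = \<zero>\<^bsub>?E\<^esub>" "\<one>\<^bsub>T'\<^esub> = \<one>\<^bsub>?E\<^esub>"
    "\<And>a b. a \<otimes>\<^bsub>T'\<^esub> b = a \<otimes>\<^bsub>?E\<^esub> b" "\<And>a b. a \<oplus>\<^bsub>T'\<^esub> b = a \<oplus>\<^bsub>?E\<^esub> b"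
    unfolding T'_def by simp_all
  have LhomT: "?L \<in> ring_hom A T'"
  proof (rule ring_hom_memI)
    fix a assume "a \<in> carrier A" then show "?L a \<in> carrier T'" using LT T'simps by blast
  next
    fix a b assume "a \<in> carrier A" "b \<in> carrier A"
    then show "?L (a \<otimes>\<^bsub>A\<^esub> b) = ?L a \<otimes>\<^bsub>T'\<^esub> ?L b" "?L (a \<oplus>\<^bsub>A\<^esub> b) = ?L a \<oplus>\<^bsub>T'\<^esub> ?L b"
      using ring_hom_mult[OF Lhom] ring_hom_add[OF Lhom] T'simps by auto
  next
    show "?L \<one>\<^bsub>A\<^esub> = \<one>\<^bsub>T'\<^esub>" using ring_hom_one[OF Lhom] T'simps by simp
  qed
  have L0: "?L \<zero>\<^bsub>A\<^esub> = \<zero>\<^bsub>?E\<^esub>" using ring_hom_zero[OF Lhom Ar Er] .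
  define Zs where "Zs = {M. ideal M T' \<and> M \<inter> ?L ` carrier A = {\<zero>\<^bsub>?E\<^esub>}}"
  have "\<exists>M\<in>Zs. \<forall>N\<in>Zs. M \<subseteq> N \<longrightarrow> N = M"
  proof (rule subset_Zorn_nonempty)
    have "ideal {\<zero>\<^bsub>T'\<^esub>} T'" by (rule T'.zeroideal)
    moreover have "{\<zero>\<^bsub>T'\<^esub>} \<inter> ?L ` carrier A = {\<zero>\<^bsub>?E\<^esub>}"
      using L0 T'simps A.zero_closed by (metis (no_types, lifting) Int_insert_left_if1 Int_empty_left image_eqI)
    ultimately show "Zs \<noteq> {}" unfolding Zs_def by blast
  next
    fix C assume C: "C \<noteq> {}" "subset.chain Zs C"
    then have CZ: "C \<subseteq> Zs" and ch: "\<forall>U\<in>C. \<forall>W\<in>C. U \<subseteq> W \<or> W \<subseteq> U" by (auto simp: subset_chain_def)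
    have "ideal (\<Union>C) T'"
      by (rule ideal_chain_Union[OF T'r C(1)]) (use CZ ch Zs_def in auto)
    moreover have "(\<Union>C) \<inter> ?L ` carrier A = {\<zero>\<^bsub>?E\<^esub>}"
    proof
      show "(\<Union>C) \<inter> ?L ` carrier A \<subseteq> {\<zero>\<^bsub>?E\<^esub>}" using CZ unfolding Zs_def by blast
      obtain I where "I \<in> C" using C(1) by blast
      then show "{\<zero>\<^bsub>?E\<^esub>} \<subseteq> (\<Union>C) \<inter> ?L ` carrier A" using CZ unfolding Zs_def by blast
    qed
    ultimately show "\<Union>C \<in> Zs" unfolding Zs_def by blast
  qed
  then obtain M where MZ: "M \<in> Zs" and Mmax: "\<And>N. N \<in> Zs \<Longrightarrow> M \<subseteq> N \<Longrightarrow> N = M" by blast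
  have MI: "ideal M T'" and MA: "M \<inter> ?L ` carrier A = {\<zero>\<^bsub>?E\<^esub>}" using MZ unfolding Zs_def by auto
  interpret MI: ideal M T' by (rule MI)
  define Q where "Q = T' Quot M"
  define \<pi> where "\<pi> = a_r_coset T' M"
  have Qr: "ring Q" unfolding Q_def by (rule MI.quotient_is_ring)
  have pihom: "\<pi> \<in> ring_hom T' Q" unfolding Q_def \<pi>_def by (rule MI.rcos_ring_hom)
  have carrQ: "carrier Q = \<pi> ` T"
    unfolding Q_def \<pi>_def FactRing_def A_RCOSETS_def' using T'simps(1) by auto
  have zeroQ: "\<zero>\<^bsub>Q\<^esub> = M" unfolding Q_def FactRing_def by simp
  have "countable (carrier Q)" using carrQ cntT by simp
  then obtain enc :: "('a \<Rightarrow> 'a) set \<Rightarrow> nat" where enc: "inj_on enc (carrier Q)" unfolding countable_def by blast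
  define R where "R = transport_ring Q enc"
  have Rr: "ring R" and enchom: "enc \<in> ring_hom Q R" and carrR: "carrier R = enc ` carrier Q"
    using transport_ring[OF Qr enc] unfolding R_def by auto
  have zeroR: "\<zero>\<^bsub>R\<^esub> = enc M" unfolding R_def transport_ring_def using zeroQ by (simp add: Let_def)
  define \<psi> where "\<psi> = enc \<circ> \<pi>"
  have psihom: "\<psi> \<in> ring_hom T' R" unfolding \<psi>_def by (rule ring_hom_trans[OF pihom enchom])
  interpret PSI: ring_hom_ring T' R \<psi> using T'r Rr psihom by (rule ring_hom_ringI2)
  have surj: "\<psi> ` carrier T' = carrier R" unfolding \<psi>_def using carrR carrQ T'simps(1) by (simp add: image_comp)
  have Mpsi: "\<psi> m = \<zero>\<^bsub>R\<^esub>" if "m \<in> M" for m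
    unfolding \<psi>_def \<pi>_def using T'.a_rcos_zero[OF MI that] zeroR by simp
  have kerpsi: "t \<in> M" if t: "t \<in> T" "\<psi> t = \<zero>\<^bsub>R\<^esub>" for t
  proof -
    have "\<pi> t \<in> carrier Q" using t carrQ by blast
    moreover have "M \<in> carrier Q" using zeroQ Qr ring.ring_simprules(2) by metis
    moreover have "enc (\<pi> t) = enc M" using t zeroR unfolding \<psi>_def by simp
    ultimately have "\<pi> t = M" using enc by (meson inj_onD)
    then show ?thesis using MI.rcos_const_imp_mem t T'simps(1) unfolding \<pi>_def by blast
  qed
  define h where "h = \<psi> \<circ> ?L"
  have hhom: "h \<in> ring_hom A R" unfolding h_def by (rule ring_hom_trans[OF LhomT psihom])
  interpret H: ring_hom_ring A R h using Ar Rr hhom by (rule ring_hom_ringI2)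
  have kerh: "a = \<zero>\<^bsub>A\<^esub>" if a: "a \<in> carrier A" "h a = \<zero>\<^bsub>R\<^esub>" for a
  proof -
    have "?L a \<in> M" using kerpsi[of "?L a"] a LT unfolding h_def by auto
    then have "?L a \<in> M \<inter> ?L ` carrier A" using a by blast
    then have "?L a = ?L \<zero>\<^bsub>A\<^esub>" using MA L0 by auto
    then show ?thesis using V.L_inj a A.zero_closed by (meson inj_onD)
  qed
  have injh: "inj_on h (carrier A)"
  proof (rule H.trivial_ker_imp_inj)
    show "a_kernel A R h = {\<zero>\<^bsub>A\<^esub>}" unfolding a_kernel_def' using kerh H.hom_zero by auto
  qed
  have nt: "\<one>\<^bsub>R\<^esub> \<noteq> \<zero>\<^bsub>R\<^esub>"
  proof
    assume "\<one>\<^bsub>R\<^esub> = \<zero>\<^bsub>R\<^esub>"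
    then have "h \<one>\<^bsub>A\<^esub> = \<zero>\<^bsub>R\<^esub>" by simp
    then have "\<one>\<^bsub>A\<^esub> = \<zero>\<^bsub>A\<^esub>" using kerh by simp
    then show False using primeA unfolding prime_ring_def by blast
  qed
  have meets: "\<forall>J. ideal J R \<and> J \<noteq> {\<zero>\<^bsub>R\<^esub>} \<longrightarrow> J \<inter> h ` carrier A \<noteq> {\<zero>\<^bsub>R\<^esub>}"
  proof (intro allI impI)
    fix J assume JJ: "ideal J R \<and> J \<noteq> {\<zero>\<^bsub>R\<^esub>}"
    then have Jid: "ideal J R" and Jnz: "J \<noteq> {\<zero>\<^bsub>R\<^esub>}" by auto
    define Kp where "Kp = {t \<in> carrier T'. \<psi> t \<in> J}"
    have Kid: "ideal Kp T'" unfolding Kp_def by (rule PSI.ideal_vimage[OF Jid])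
    have J0: "\<zero>\<^bsub>R\<^esub> \<in> J" using additive_subgroup.zero_closed[OF ideal.axioms(1)[OF Jid]] .
    have MK: "M \<subseteq> Kp" unfolding Kp_def using Mpsi J0 MI.Icarr by auto
    obtain j where j: "j \<in> J" "j \<noteq> \<zero>\<^bsub>R\<^esub>" using Jnz J0 by blast
    then have "j \<in> carrier R" using ideal.Icarr[OF Jid] by blast
    then obtain t where t: "t \<in> T" "j = \<psi> t" using surj T'simps(1) by auto
    have "t \<in> Kp" "t \<notin> M" using t j Mpsi unfolding Kp_def T'simps(1) by auto
    then have "Kp \<noteq> M" by blast
    then have "Kp \<notin> Zs" using Mmax MK by blast
    then have "Kp \<inter> ?L ` carrier A \<noteq> {\<zero>\<^bsub>?E\<^esub>}" using Kid unfolding Zs_def by blast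
    moreover have "\<zero>\<^bsub>?E\<^esub> \<in> Kp \<inter> ?L ` carrier A"
      using L0 MK MI.zero_closed T'simps(2) A.zero_closed by (metis IntI image_eqI subsetD)
    ultimately obtain a where a: "a \<in> carrier A" "?L a \<in> Kp" "?L a \<noteq> \<zero>\<^bsub>?E\<^esub>" by blast
    have "a \<noteq> \<zero>\<^bsub>A\<^esub>" using a L0 by auto
    then have "h a \<noteq> \<zero>\<^bsub>R\<^esub>" using kerh a by blast
    moreover have "h a \<in> J" using a unfolding Kp_def h_def by simp
    ultimately show "J \<inter> h ` carrier A \<noteq> {\<zero>\<^bsub>R\<^esub>}" using a by blast
  qed
  have vnrR: "von_neumann_regular R"
    using vnr_image[OF vnrT[folded T'_def] Rr psihom surj] .
  have primeR: "prime_ring R" by (rule prime_from_meets[OF Rr primeA hhom injh nt meets])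
  show ?thesis
    using Rr primeR vnrR hhom injh meets by (intro exI[of _ R] exI[of _ h]) auto
qed

end
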